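(* Let $G$ be an abelian Lie group whose identity component $G^0$ has finite index in $G$. If $S$ is a finitely generated subsemigroup of $G$ which is somewhere dense in $G$ (i.e. $\overline{S}$ contains a non-empty open subset of $G$), then $S\cap G^0$ contains a finitely generated subsemigroup of $G^0$ which is somewhere dense in $G^0$. *)

theory Defs
  imports "HOL-Analysis.Analysis"
begin

text \<open>Model of R^n inside the product space nat => real (product topology):
  functions vanishing from index n on. For n = 0 this is a single point.\<close>
definition euclid_model :: "nat \<Rightarrow> (nat \<Rightarrow> real) set" where
  "euclid_model n = {f. \<forall>i\<ge>n. f i = 0}"

definition locally_euclidean :: "'a::topological_space itself \<Rightarrow> bool" where
  "locally_euclidean _ \<longleftrightarrow>
     (\<forall>x::'a. \<exists>U n V. open U \<and> x \<in> U \<and>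
        openin (top_of_set (euclid_model n)) V \<and> U homeomorphic V)"

definition topological_ab_group :: "'a::{topological_space,ab_group_add} itself \<Rightarrow> bool" where
  "topological_ab_group _ \<longleftrightarrow>
     continuous_on UNIV (\<lambda>p::'a \<times> 'a. fst p + snd p) \<and>
     continuous_on UNIV (\<lambda>x::'a. - x)"

text \<open>Abelian Lie group (topological rendering: a Hausdorff locally
  Euclidean topological group carries a unique compatible Lie group structure).\<close>
definition abelian_lie_group :: "'a::{t2_space,ab_group_add} itself \<Rightarrow> bool" where
  "abelian_lie_group T \<longleftrightarrow> topological_ab_group T \<and> locally_euclidean T"

definition identity_component :: "'a::{topological_space,ab_group_add} set" where
  "identity_component = connected_component_set UNIV 0"

inductive_set sgr_gen :: "'a::plus set \<Rightarrow> 'a set" for F where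
  base: "x \<in> F \<Longrightarrow> x \<in> sgr_gen F"
| add: "x \<in> sgr_gen F \<Longrightarrow> y \<in> sgr_gen F \<Longrightarrow> x + y \<in> sgr_gen F"

definition fin_gen_subsemigroup_of :: "'a::plus set \<Rightarrow> 'a set \<Rightarrow> bool" where
  "fin_gen_subsemigroup_of S H \<longleftrightarrow> (\<exists>F. finite F \<and> F \<subseteq> H \<and> S = sgr_gen F)"

definition somewhere_dense_in :: "'a::topological_space set \<Rightarrow> 'a set \<Rightarrow> bool" where
  "somewhere_dense_in S H \<longleftrightarrow>
     (\<exists>U. U \<noteq> {} \<and> openin (top_of_set H) U \<and> U \<subseteq> closure S \<inter> H)"

end

theory Submission
  imports Defs
begin

fun nsm :: "nat \<Rightarrow> 'a::monoid_add \<Rightarrow> 'a" where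
  "nsm 0 x = 0" | "nsm (Suc n) x = x + nsm n x"

lemma nsm_add: "nsm (m + n) x = nsm m x + nsm n x"
  by (induction m) (auto simp: add.assoc)

lemma nsm_mult: "nsm (m * n) x = nsm m (nsm n x)"
  by (induction m) (auto simp: nsm_add)

lemma sgr_gen_mono: assumes "A \<subseteq> B" "x \<in> sgr_gen A" shows "x \<in> sgr_gen B"
  using assms(2) by (induction rule: sgr_gen.induct) (use assms(1) in \<open>auto intro: sgr_gen.intros\<close>)

lemma sgr_gen_sub: assumes "A \<subseteq> X" "\<And>x y. x\<in>X \<Longrightarrow> y\<in>X \<Longrightarrow> x+y\<in>X" "x \<in> sgr_gen A" shows "x \<in> X"
  using assms(3) by (induction rule: sgr_gen.induct) (use assms(1,2) in auto)

lemma nsm_sgr: "x \<in> sgr_gen A \<Longrightarrow> n \<ge> 1 \<Longrightarrow> nsm n x \<in> sgr_gen A"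
proof (induction n)
  case (Suc n) then show ?case by (cases n) (auto intro: sgr_gen.intros)
qed simp

lemma Z_add: fixes A :: "'a::monoid_add set"
  shows "x \<in> insert 0 (sgr_gen A) \<Longrightarrow> y \<in> insert 0 (sgr_gen A) \<Longrightarrow> x + y \<in> insert 0 (sgr_gen A)"
  by (auto intro: sgr_gen.intros)

lemma Z_nsm: fixes A :: "'a::monoid_add set"
  shows "x \<in> insert 0 (sgr_gen A) \<Longrightarrow> nsm n x \<in> insert 0 (sgr_gen A)"
proof (induction n)
  case (Suc n) then show ?case using Z_add[of x A "nsm n x"] by simp
qed simp

lemma Z_sum: fixes A :: "'a::comm_monoid_add set"
  shows "finite I \<Longrightarrow> (\<And>i. i\<in>I \<Longrightarrow> g i \<in> insert 0 (sgr_gen A)) \<Longrightarrow> sum g I \<in> insert 0 (sgr_gen A)"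
proof (induction I rule: finite_induct)
  case (insert i I) then show ?case using Z_add[of "g i" A "sum g I"] by simp
qed simp

definition Rset :: "'a::comm_monoid_add set \<Rightarrow> nat \<Rightarrow> 'a set" where
  "Rset F d = (\<lambda>a. \<Sum>f\<in>F. nsm (a f) f) ` (F \<rightarrow>\<^sub>E {..<d})"

lemma Rset_finite: "finite F \<Longrightarrow> finite (Rset F d)"
  unfolding Rset_def by (intro finite_imageI finite_PiE) auto

lemma Rset_add:
  assumes "finite F" "r1 \<in> Rset F d" "r2 \<in> Rset F d" "d > 0"
  shows "\<exists>r\<in>Rset F d. \<exists>y\<in>insert 0 (sgr_gen ((\<lambda>f. nsm d f) ` F)). r1 + r2 = r + y"
proof -
  obtain a1 where a1: "a1 \<in> F \<rightarrow>\<^sub>E {..<d}" "r1 = (\<Sum>f\<in>F. nsm (a1 f) f)"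
    using assms unfolding Rset_def by auto
  obtain a2 where a2: "a2 \<in> F \<rightarrow>\<^sub>E {..<d}" "r2 = (\<Sum>f\<in>F. nsm (a2 f) f)"
    using assms unfolding Rset_def by auto
  define c where "c = (\<lambda>f\<in>F. (a1 f + a2 f) mod d)"
  define q where "q = (\<lambda>f. (a1 f + a2 f) div d)"
  have c: "c \<in> F \<rightarrow>\<^sub>E {..<d}" using assms(4) by (auto simp: c_def)
  have "r1 + r2 = (\<Sum>f\<in>F. nsm (a1 f + a2 f) f)" by (simp add: a1 a2 nsm_add sum.distrib)
  also have "\<dots> = (\<Sum>f\<in>F. nsm (c f) f + nsm (q f) (nsm d f))"
  proof (rule sum.cong[OF refl])
    fix f assume f: "f \<in> F"
    have "a1 f + a2 f = (a1 f + a2 f) mod d + q f * d" by (simp add: q_def)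
    then have "nsm (a1 f + a2 f) f = nsm ((a1 f + a2 f) mod d) f + nsm (q f) (nsm d f)"
      by (metis nsm_add nsm_mult)
    then show "nsm (a1 f + a2 f) f = nsm (c f) f + nsm (q f) (nsm d f)"
      using f by (simp add: c_def)
  qed
  also have "\<dots> = (\<Sum>f\<in>F. nsm (c f) f) + (\<Sum>f\<in>F. nsm (q f) (nsm d f))" by (simp add: sum.distrib)
  finally have eq: "r1 + r2 = (\<Sum>f\<in>F. nsm (c f) f) + (\<Sum>f\<in>F. nsm (q f) (nsm d f))" .
  have "(\<Sum>f\<in>F. nsm (c f) f) \<in> Rset F d" using c unfolding Rset_def by blast
  moreover have "(\<Sum>f\<in>F. nsm (q f) (nsm d f)) \<in> insert 0 (sgr_gen ((\<lambda>f. nsm d f) ` F))"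
    by (rule Z_sum[OF assms(1)], rule Z_nsm) (auto intro: sgr_gen.base)
  ultimately show ?thesis using eq by blast
qed

lemma decomp:
  assumes "finite F" "d \<ge> 2" "x \<in> sgr_gen F"
  shows "\<exists>r\<in>Rset F d. \<exists>y\<in>insert 0 (sgr_gen ((\<lambda>f. nsm d f) ` F)). x = r + y"
  using assms(3)
proof (induction rule: sgr_gen.induct)
  case (base x)
  define a where "a = (\<lambda>g\<in>F. if g = x then 1 else 0::nat)"
  have "a \<in> F \<rightarrow>\<^sub>E {..<d}" using assms(2) by (auto simp: a_def)
  moreover have "(\<Sum>g\<in>F. nsm (a g) g) = x"
  proof -
    have "(\<Sum>g\<in>F. nsm (a g) g) = (\<Sum>g\<in>F. if g = x then x else 0)"
      by (rule sum.cong) (auto simp: a_def)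
    also have "\<dots> = x" using base assms(1) by simp
    finally show ?thesis .
  qed
  ultimately have "x \<in> Rset F d" unfolding Rset_def by (metis (no_types, lifting) rev_image_eqI)
  then show ?case by (intro bexI[of _ x] bexI[of _ 0]) auto
next
  case (add x y)
  obtain r1 y1 where 1: "r1 \<in> Rset F d" "y1 \<in> insert 0 (sgr_gen ((\<lambda>f. nsm d f) ` F))" "x = r1 + y1"
    using add by blast
  obtain r2 y2 where 2: "r2 \<in> Rset F d" "y2 \<in> insert 0 (sgr_gen ((\<lambda>f. nsm d f) ` F))" "y = r2 + y2"
    using add by blast
  obtain r y3 where 3: "r \<in> Rset F d" "y3 \<in> insert 0 (sgr_gen ((\<lambda>f. nsm d f) ` F))" "r1 + r2 = r + y3"
    using Rset_add[OF assms(1) 1(1) 2(1)] assms(2) by (metis not_numeral_le_zero not_gr_zero)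
  have "x + y = (r1 + r2) + (y1 + y2)" using 1 2 by (simp add: add_ac)
  also have "\<dots> = r + (y3 + (y1 + y2))" using 3(3) by (simp add: add.assoc)
  finally have "x + y = r + (y3 + (y1 + y2))" .
  moreover have "y3 + (y1 + y2) \<in> insert 0 (sgr_gen ((\<lambda>f. nsm d f) ` F))"
    using Z_add[OF 3(2) Z_add[OF 1(2) 2(2)]] .
  ultimately show ?case using 3 by blast
qed

lemma open_in_finite_union:
  assumes "finite \<A>" "open U" "U \<noteq> {}" "U \<subseteq> closure (\<Union>\<A>)"
  shows "\<exists>A\<in>\<A>. \<exists>V. open V \<and> V \<noteq> {} \<and> V \<subseteq> closure A"
  using assms
proof (induction \<A> arbitrary: U rule: finite_induct)
  case empty thus ?case by auto
next
  case (insert A \<A>)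
  show ?case
  proof (cases "U - closure A = {}")
    case True then have "U \<subseteq> closure A" by auto
    thus ?thesis using insert.prems by blast
  next
    case False
    have "open (U - closure A)" using insert.prems by (auto intro: open_Diff)
    moreover have "U - closure A \<subseteq> closure (\<Union>\<A>)" using insert.prems by auto
    ultimately obtain B V where "B \<in> \<A>" "open V" "V\<noteq>{}" "V \<subseteq> closure B"
      using insert.IH[of "U - closure A"] False by auto
    thus ?thesis by auto
  qed
qed

lemma transl_cont:
  assumes "topological_ab_group TYPE('a::{topological_space,ab_group_add})"
  shows "continuous_on UNIV (\<lambda>x::'a. a + x)"
proof -
  have c: "continuous_on UNIV (\<lambda>p::'a \<times> 'a. fst p + snd p)"
    using assms by (simp add: topological_ab_group_def)
  have "continuous_on UNIV (\<lambda>x::'a. (a,x))" by (intro continuous_intros)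
  from continuous_on_compose2[OF c this] show ?thesis by simp
qed

lemma H0: "(0::'a::{topological_space,ab_group_add}) \<in> identity_component"
  by (simp add: identity_component_def)

lemma H_closed: "closed (identity_component::'a::{topological_space,ab_group_add} set)"
  by (simp add: identity_component_def closed_connected_component)

lemma H_conn: "connected (identity_component::'a::{topological_space,ab_group_add} set)"
  by (simp add: identity_component_def)

lemma H_add:
  assumes "topological_ab_group TYPE('a::{topological_space,ab_group_add})"
    "a \<in> identity_component" "b \<in> identity_component"
  shows "a + b \<in> (identity_component::'a set)"
proof -
  let ?H = "identity_component :: 'a set"
  have "connected ((\<lambda>x. a + x) ` ?H)"
    by (rule connected_continuous_image[OF continuous_on_subset[OF transl_cont[OF assms(1)]]])
       (auto simp: H_conn)
  moreover have "a \<in> (\<lambda>x. a + x) ` ?H" using H0 by force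
  ultimately have "connected (?H \<union> (\<lambda>x. a + x) ` ?H)"
    using assms(2) H_conn by (intro connected_Un) auto
  then have "?H \<union> (\<lambda>x. a + x) ` ?H \<subseteq> connected_component_set UNIV 0"
    by (rule connected_component_maximal[rotated]) (auto simp: H0)
  then show ?thesis using assms(3) by (auto simp: identity_component_def)
qed

lemma H_neg:
  assumes "topological_ab_group TYPE('a::{topological_space,ab_group_add})"
    "a \<in> identity_component"
  shows "- a \<in> (identity_component::'a set)"
proof -
  let ?H = "identity_component :: 'a set"
  have "connected (uminus ` ?H)"
    by (rule connected_continuous_image[OF continuous_on_subset]) 
       (use assms in \<open>auto simp: H_conn topological_ab_group_def\<close>)
  moreover have "0 \<in> uminus ` ?H" using H0 by force
  ultimately have "uminus ` ?H \<subseteq> connected_component_set UNIV 0"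
    by (intro connected_component_maximal) auto
  then show ?thesis using assms(2) by (auto simp: identity_component_def)
qed

lemma nsm_H:
  assumes "topological_ab_group TYPE('a::{topological_space,ab_group_add})"
    "a \<in> identity_component"
  shows "nsm n a \<in> (identity_component::'a set)"
  by (induction n) (auto simp: H0 H_add assms)

theorem lemma2p5:
  fixes S :: "'a::{t2_space,ab_group_add} set"
  assumes "abelian_lie_group TYPE('a)"
    and "finite ((\<lambda>g. (\<lambda>x. g + x) ` (identity_component :: 'a set)) ` UNIV)"
    and "fin_gen_subsemigroup_of S UNIV"
    and "somewhere_dense_in S UNIV"
  shows "\<exists>T. T \<subseteq> S \<inter> identity_component \<and>
             fin_gen_subsemigroup_of T identity_component \<and>
             somewhere_dense_in T identity_component"
proof -
  let ?H = "identity_component :: 'a set"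
  have tg: "topological_ab_group TYPE('a)" using assms(1) by (simp add: abelian_lie_group_def)
  define C where "C = (\<lambda>g. (\<lambda>x. g + x) ` ?H) ` UNIV"
  have finC: "finite C" using assms(2) C_def by simp
  obtain F where F: "finite F" "S = sgr_gen F"
    using assms(3) unfolding fin_gen_subsemigroup_of_def by blast
  have pig: "\<exists>k\<ge>1. nsm k s \<in> ?H" for s :: 'a
  proof -
    let ?N = "\<lambda>n. (\<lambda>x. nsm n s + x) ` ?H"
    have "range ?N \<subseteq> C" by (auto simp: C_def)
    hence "finite (range ?N)" using finC finite_subset by blast
    hence "\<not> inj ?N" using finite_imageD infinite_UNIV_nat by blast
    then obtain i j where ij: "i \<noteq> j" "?N i = ?N j" unfolding inj_def by blast
    have key: "nsm (j - i) s \<in> ?H" if ij': "i < j" "?N i = ?N j" for i j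
    proof -
      have "nsm j s \<in> ?N j" using H0 by force
      then obtain h where h: "h \<in> ?H" "nsm j s = nsm i s + h" using ij' by auto
      have "nsm j s = nsm i s + nsm (j-i) s" using ij' nsm_add[of i "j-i" s] by simp
      with h show ?thesis by simp
    qed
    show ?thesis
    proof (cases "i < j")
      case True thus ?thesis using key[of i j] ij by (intro exI[of _ "j-i"]) auto
    next
      case False hence "j < i" using ij by simp
      thus ?thesis using key[of j i] ij by (intro exI[of _ "i-j"]) auto
    qed
  qed
  have "\<forall>s. \<exists>k. k \<ge> 1 \<and> nsm k s \<in> ?H" using pig by blast
  then obtain kf where kf: "\<And>s. kf s \<ge> 1 \<and> nsm (kf s) s \<in> ?H" by metis
  define d where "d = 2 * (\<Prod>f\<in>F. kf f)"
  have "(\<Prod>f\<in>F. kf f) > 0" using kf by (simp add: prod_pos Suc_le_eq)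
  hence d2: "d \<ge> 2" by (simp add: d_def)
  have dH: "nsm d f \<in> ?H" if "f \<in> F" for f
  proof -
    have "d = (2 * (\<Prod>g\<in>F - {f}. kf g)) * kf f"
      using that F(1) by (simp add: d_def prod.remove)
    hence "nsm d f = nsm (2 * (\<Prod>g\<in>F - {f}. kf g)) (nsm (kf f) f)" by (simp add: nsm_mult)
    thus ?thesis using nsm_H[OF tg] kf by simp
  qed
  define D where "D = (\<lambda>f. nsm d f) ` F"
  define R where "R = Rset F d"
  define F' where "F' = (R \<union> D) \<inter> ?H \<inter> S"
  have finF': "finite F'" unfolding F'_def R_def D_def using F(1) Rset_finite by auto
  have SH_closed: "x + y \<in> S \<inter> ?H" if "x \<in> S \<inter> ?H" "y \<in> S \<inter> ?H" for x y
    using that F(2) H_add[OF tg] by (auto intro: sgr_gen.add)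
  have DH: "D \<subseteq> ?H" using dH D_def by auto
  have DS: "D \<subseteq> S" unfolding D_def F(2) using d2 by (auto intro!: nsm_sgr intro: sgr_gen.base)
  have sgDH: "sgr_gen D \<subseteq> ?H" using sgr_gen_sub[OF DH] H_add[OF tg] by blast
  have sgDF': "sgr_gen D \<subseteq> sgr_gen F'"
    using DH DS sgr_gen_mono[of D F'] unfolding F'_def by blast
  have TE: "S \<inter> ?H = sgr_gen F'"
  proof
    show "sgr_gen F' \<subseteq> S \<inter> ?H"
      using sgr_gen_sub[of F' "S \<inter> ?H"] SH_closed unfolding F'_def by blast
  next
    show "S \<inter> ?H \<subseteq> sgr_gen F'"
    proof
      fix x assume x: "x \<in> S \<inter> ?H"
      then obtain r y where ry: "r \<in> R" "y \<in> insert 0 (sgr_gen D)" "x = r + y"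
        using decomp[OF F(1) d2] F(2) unfolding R_def D_def by blast
      have r0S: "r \<in> insert 0 S"
      proof -
        obtain a where "r = (\<Sum>f\<in>F. nsm (a f) f)" using ry(1) unfolding R_def Rset_def by auto
        moreover have "(\<Sum>f\<in>F. nsm (a f) f) \<in> insert 0 (sgr_gen F)"
          by (rule Z_sum[OF F(1)], rule Z_nsm) (auto intro: sgr_gen.base)
        ultimately show ?thesis using F(2) by simp
      qed
      show "x \<in> sgr_gen F'"
      proof (cases "y = 0")
        case True
        hence "r \<in> F'" using ry x unfolding F'_def by auto
        thus ?thesis using True ry by (auto intro: sgr_gen.base)
      next
        case False
        hence yD: "y \<in> sgr_gen D" using ry by auto
        have "r = x + - y" using ry by simp
        moreover have "- y \<in> ?H" using yD sgDH H_neg[OF tg] by auto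
        ultimately have rH: "r \<in> ?H" using x H_add[OF tg, of x "- y"] by simp
        show ?thesis
        proof (cases "r = 0")
          case True thus ?thesis using ry yD sgDF' by auto
        next
          case False
          hence "r \<in> F'" using r0S rH ry unfolding F'_def by auto
          thus ?thesis using ry yD sgDF' by (auto intro: sgr_gen.intros)
        qed
      qed
    qed
  qed
  obtain U where U: "U \<noteq> {}" "open U" "U \<subseteq> closure S"
    using assms(4) unfolding somewhere_dense_in_def by auto
  have Sun: "S = \<Union>((\<lambda>c. S \<inter> c) ` C)"
  proof
    show "S \<subseteq> \<Union>((\<lambda>c. S \<inter> c) ` C)"
    proof
      fix x assume "x \<in> S"
      moreover have "x \<in> (\<lambda>y. x + y) ` ?H" using H0 by force
      ultimately show "x \<in> \<Union>((\<lambda>c. S \<inter> c) ` C)" unfolding C_def by blast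
    qed
  qed auto
  obtain A V where AV: "A \<in> (\<lambda>c. S \<inter> c) ` C" "open V" "V \<noteq> {}" "V \<subseteq> closure A"
    using open_in_finite_union[of "(\<lambda>c. S \<inter> c) ` C" U] finC U Sun by auto
  then obtain g where A: "A = S \<inter> (\<lambda>x. g + x) ` ?H" unfolding C_def by auto
  have "A \<noteq> {}" using AV by auto
  then obtain s0 h0 where s0: "s0 \<in> S" "h0 \<in> ?H" "s0 = g + h0" using A by auto
  obtain k where k: "k \<ge> 1" "nsm k s0 \<in> ?H" using pig by blast
  define t where "t = nsm (2*k - 1) s0"
  have tS: "t \<in> S" unfolding t_def F(2) using k s0 F(2) by (intro nsm_sgr) auto
  have "Suc (2*k-1) = 2*k" using k by simp
  hence "s0 + t = nsm (2*k) s0" unfolding t_def by (metis nsm.simps(2))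
  also have "\<dots> = nsm 2 (nsm k s0)" by (simp add: nsm_mult)
  finally have stH: "s0 + t \<in> ?H" using nsm_H[OF tg k(2)] by simp
  have AT: "(\<lambda>x. t + x) ` A \<subseteq> S \<inter> ?H"
  proof
    fix z assume "z \<in> (\<lambda>x. t + x) ` A"
    then obtain h where h: "h \<in> ?H" "g + h \<in> S" "z = t + (g + h)" using A by auto
    have "z = (s0 + t) + (- h0 + h)" using h s0 by (simp add: algebra_simps)
    hence "z \<in> ?H" using stH h H_add[OF tg] H_neg[OF tg] s0 by metis
    moreover have "z \<in> S" using h tS F(2) by (auto intro: sgr_gen.add)
    ultimately show "z \<in> S \<inter> ?H" by auto
  qed
  have ct: "continuous_on (closure A) (\<lambda>x. t + x)"
    using continuous_on_subset[OF transl_cont[OF tg]] by blast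
  have W1: "(\<lambda>x. t + x) ` closure A \<subseteq> closure (S \<inter> ?H)"
    by (rule image_closure_subset[OF ct]) (use AT closure_subset[of "S \<inter> ?H"] in blast)+
  have W2: "(\<lambda>x. t + x) ` closure A \<subseteq> ?H"
    by (rule image_closure_subset[OF ct H_closed]) (use AT in auto)
  define W where "W = (\<lambda>x. t + x) ` V"
  have Weq: "W = (\<lambda>x. - t + x) -` V"
  proof
    show "W \<subseteq> (\<lambda>x. - t + x) -` V" unfolding W_def by auto
    show "(\<lambda>x. - t + x) -` V \<subseteq> W"
    proof
      fix y assume "y \<in> (\<lambda>x. - t + x) -` V"
      hence "- t + y \<in> V" by simp
      moreover have "y = t + (- t + y)" by simp
      ultimately show "y \<in> W" unfolding W_def by blast
    qed
  qed
  have Wo: "open W" unfolding Weq by (rule open_vimage[OF AV(2) transl_cont[OF tg]])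
  have WH: "W \<subseteq> ?H" and WT: "W \<subseteq> closure (S \<inter> ?H)"
    using W1 W2 AV(4) unfolding W_def by blast+
  have "somewhere_dense_in (S \<inter> ?H) ?H"
    unfolding somewhere_dense_in_def
  proof (intro exI conjI)
    show "W \<noteq> {}" using AV(3) W_def by auto
    show "openin (top_of_set ?H) W" unfolding openin_open using Wo WH by blast
    show "W \<subseteq> closure (S \<inter> ?H) \<inter> ?H" using WH WT by auto
  qed
  moreover have "fin_gen_subsemigroup_of (S \<inter> ?H) ?H"
    unfolding fin_gen_subsemigroup_of_def using finF' TE unfolding F'_def by blast
  ultimately show ?thesis by blast
qed

end
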